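(* Let $M=\{a^i: i\geq 0\}\cup\{b_j: j\in\mathbb{Z}\}\cup\{0\}$ be the monoid with zero $0$ and identity $a^0=1$, where $a^ia^k=a^{i+k}$, and for $i\geq1$, $j,k\in\mathbb{Z}$: $a^ib_j=b_{i+j}$, $b_ja^i=0$, $b_jb_k=0$. Then $M$ is residually finite, $b_0$ and $b_1$ are not $\mathcal{L}$-related in $M$, but for every finite monoid $T$ and every homomorphism $\theta:M\to T$ the elements $\theta(b_0)$ and $\theta(b_1)$ are $\mathcal{L}$-related in $T$.
   Context: A monoid is residually finite if any two distinct elements are separated by a homomorphism to a finite monoid. Green's relation $\mathcal{L}$ on a monoid $T$: $x\mathcal{L}y$ iff $Tx=Ty$. *)

theory Defs
  imports "HOL-Algebra.Group"
begin

datatype Melt = A nat | B int | Zero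

fun Mmult :: "Melt \<Rightarrow> Melt \<Rightarrow> Melt" where
  "Mmult (A i) (A k) = A (i + k)"
| "Mmult (A i) (B j) = B (int i + j)"
| "Mmult (B j) (A i) = (if i = 0 then B j else Zero)"
| "Mmult (B j) (B k) = Zero"
| "Mmult Zero x = Zero"
| "Mmult (A i) Zero = Zero"
| "Mmult (B j) Zero = Zero"

definition M :: "Melt monoid" where
  "M = \<lparr>carrier = UNIV, mult = Mmult, one = A 0\<rparr>"

definition mon_hom :: "('a, 'c) monoid_scheme \<Rightarrow> ('b, 'd) monoid_scheme \<Rightarrow> ('a \<Rightarrow> 'b) set" where
  "mon_hom S T = {h. h \<in> hom S T \<and> h \<one>\<^bsub>S\<^esub> = \<one>\<^bsub>T\<^esub>}"

definition green_L :: "('a, 'c) monoid_scheme \<Rightarrow> 'a \<Rightarrow> 'a \<Rightarrow> bool" where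
  "green_L T x y \<longleftrightarrow>
     (\<lambda>t. t \<otimes>\<^bsub>T\<^esub> x) ` carrier T = (\<lambda>t. t \<otimes>\<^bsub>T\<^esub> y) ` carrier T"

text \<open>Residual finiteness. Every finite monoid is isomorphic to one whose carrier
  is a set of natural numbers, so it suffices to range over finite monoids on nat.\<close>
definition residually_finite :: "('a, 'c) monoid_scheme \<Rightarrow> bool" where
  "residually_finite S \<longleftrightarrow>
     (\<forall>x\<in>carrier S. \<forall>y\<in>carrier S. x \<noteq> y \<longrightarrow>
        (\<exists>(T :: nat monoid) h. monoid T \<and> finite (carrier T) \<and> h \<in> mon_hom S T \<and> h x \<noteq> h y))"

end

theory Submission
  imports Defs "HOL-Library.Countable"
begin

lemma Mmult_assoc: "Mmult (Mmult x y) z = Mmult x (Mmult y z)"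
  by (cases x; cases y; cases z) (auto simp: add.assoc)

lemma monoid_M: "monoid M"
proof -
  have "\<And>x. Mmult (A 0) x = x" "\<And>x. Mmult x (A 0) = x"
    by (case_tac x; simp)+
  thus ?thesis unfolding monoid_def M_def by (auto simp: Mmult_assoc)
qed

lemma M_simps[simp]: "carrier M = UNIV" "mult M = Mmult" "one M = A 0"
  by (auto simp: M_def)

lemma not_L: "\<not> green_L M (B 0) (B 1)"
proof
  assume "green_L M (B 0) (B 1)"
  moreover have "B 0 \<in> (\<lambda>t. Mmult t (B 0)) ` UNIV"
    by (rule image_eqI[where x="A 0"]) auto
  ultimately have "B 0 \<in> (\<lambda>t. Mmult t (B 1)) ` UNIV"
    unfolding green_L_def by simp
  then obtain t where "Mmult t (B 1) = B 0" by auto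
  thus False by (cases t) auto
qed

lemma hom_pow:
  assumes T: "monoid T" and h: "\<theta> \<in> mon_hom M T"
  shows "\<theta> (A n) = \<theta> (A 1) [^]\<^bsub>T\<^esub> n"
proof (induction n)
  case 0 thus ?case using h by (simp add: mon_hom_def)
next
  case (Suc n)
  have "\<theta> (A (Suc n)) = \<theta> (Mmult (A n) (A 1))" by simp
  also have "\<dots> = \<theta> (A n) \<otimes>\<^bsub>T\<^esub> \<theta> (A 1)"
  proof -
    have "\<forall>x y. \<theta> (Mmult x y) = \<theta> x \<otimes>\<^bsub>T\<^esub> \<theta> y"
      using h unfolding mon_hom_def hom_def by simp
    thus ?thesis by blast
  qed
  finally show ?case using Suc by simp
qed

lemma finite_part:
  assumes T: "monoid T" and fin: "finite (carrier T)" and h: "\<theta> \<in> mon_hom M T"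
  shows "green_L T (\<theta> (B 0)) (\<theta> (B 1))"
proof -
  interpret monoid T by fact
  have hm: "\<And>x y. \<theta> (Mmult x y) = \<theta> x \<otimes>\<^bsub>T\<^esub> \<theta> y"
    using h unfolding mon_hom_def hom_def by auto
  have hc: "\<And>x. \<theta> x \<in> carrier T"
    using h unfolding mon_hom_def hom_def by auto
  define g where "g = \<theta> (A 1)"
  have gc: "g \<in> carrier T" using hc g_def by simp
  have pw: "\<And>n. \<theta> (A n) = g [^]\<^bsub>T\<^esub> n" unfolding g_def by (rule hom_pow[OF T h])
  have "\<not> inj (\<lambda>n::nat. g [^]\<^bsub>T\<^esub> n)"
  proof
    assume "inj (\<lambda>n::nat. g [^]\<^bsub>T\<^esub> n)"
    moreover have "finite (range (\<lambda>n::nat. g [^]\<^bsub>T\<^esub> n))"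
      using fin gc by (metis (no_types, lifting) finite_subset image_subsetI nat_pow_closed)
    ultimately have "finite (UNIV :: nat set)" using finite_imageD by blast
    thus False by simp
  qed
  then obtain i j :: nat where ij: "i \<noteq> j" "g [^]\<^bsub>T\<^esub> i = g [^]\<^bsub>T\<^esub> j"
    unfolding inj_def by auto
  obtain i j :: nat where ij2: "i < j" "g [^]\<^bsub>T\<^esub> i = g [^]\<^bsub>T\<^esub> j"
    using ij by (metis linorder_neqE_nat)
  define m where "m = j - i"
  have m1: "m \<ge> 1" using ij2 m_def by simp
  have B0i: "B 0 = Mmult (A i) (B (- int i))" by simp
  have e: "\<theta> (B 0) = g [^]\<^bsub>T\<^esub> m \<otimes>\<^bsub>T\<^esub> \<theta> (B 0)"
  proof -
    have "\<theta> (B 0) = \<theta> (Mmult (A i) (B (- int i)))" by simp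
    also have "\<dots> = \<theta> (A i) \<otimes>\<^bsub>T\<^esub> \<theta> (B (- int i))" by (rule hm)
    also have "\<dots> = g [^]\<^bsub>T\<^esub> i \<otimes>\<^bsub>T\<^esub> \<theta> (B (- int i))" by (simp only: pw)
    also have "\<dots> = g [^]\<^bsub>T\<^esub> j \<otimes>\<^bsub>T\<^esub> \<theta> (B (- int i))" using ij2 by simp
    also have "\<dots> = g [^]\<^bsub>T\<^esub> m \<otimes>\<^bsub>T\<^esub> (g [^]\<^bsub>T\<^esub> i \<otimes>\<^bsub>T\<^esub> \<theta> (B (- int i)))"
    proof -
      have "g [^]\<^bsub>T\<^esub> j = g [^]\<^bsub>T\<^esub> m \<otimes>\<^bsub>T\<^esub> g [^]\<^bsub>T\<^esub> i"
        using ij2(1) m_def gc by (simp add: nat_pow_mult)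
      thus ?thesis using gc hc by (simp add: m_assoc)
    qed
    also have "g [^]\<^bsub>T\<^esub> i \<otimes>\<^bsub>T\<^esub> \<theta> (B (- int i)) = \<theta> (B 0)"
      by (simp only: pw[symmetric] hm[symmetric]) simp
    finally show ?thesis .
  qed
  have b1: "\<theta> (B 1) = g \<otimes>\<^bsub>T\<^esub> \<theta> (B 0)"
    using hm[of "A 1" "B 0"] g_def by simp
  have b0: "\<theta> (B 0) = g [^]\<^bsub>T\<^esub> (m - 1) \<otimes>\<^bsub>T\<^esub> \<theta> (B 1)"
  proof -
    have mm: "m = Suc (m - 1)" using m1 by simp
    have "g [^]\<^bsub>T\<^esub> m = g [^]\<^bsub>T\<^esub> (m - 1) \<otimes>\<^bsub>T\<^esub> g"
      by (subst mm) (rule nat_pow_Suc)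
    hence "\<theta> (B 0) = (g [^]\<^bsub>T\<^esub> (m - 1) \<otimes>\<^bsub>T\<^esub> g) \<otimes>\<^bsub>T\<^esub> \<theta> (B 0)"
      using e by simp
    also have "\<dots> = g [^]\<^bsub>T\<^esub> (m - 1) \<otimes>\<^bsub>T\<^esub> \<theta> (B 1)"
      unfolding b1 using gc hc by (simp add: m_assoc)
    finally show ?thesis .
  qed
  show ?thesis unfolding green_L_def
  proof (intro equalityI subsetI)
    fix x assume "x \<in> (\<lambda>t. t \<otimes>\<^bsub>T\<^esub> \<theta> (B 0)) ` carrier T"
    then obtain t where t: "t \<in> carrier T" "x = t \<otimes>\<^bsub>T\<^esub> \<theta> (B 0)" by auto
    have "x = (t \<otimes>\<^bsub>T\<^esub> g [^]\<^bsub>T\<^esub> (m - 1)) \<otimes>\<^bsub>T\<^esub> \<theta> (B 1)"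
      unfolding t(2) using gc hc t(1) by (subst b0) (simp add: m_assoc)
    thus "x \<in> (\<lambda>t. t \<otimes>\<^bsub>T\<^esub> \<theta> (B 1)) ` carrier T" using t gc by auto
  next
    fix x assume "x \<in> (\<lambda>t. t \<otimes>\<^bsub>T\<^esub> \<theta> (B 1)) ` carrier T"
    then obtain t where t: "t \<in> carrier T" "x = t \<otimes>\<^bsub>T\<^esub> \<theta> (B 1)" by auto
    have "x = (t \<otimes>\<^bsub>T\<^esub> g) \<otimes>\<^bsub>T\<^esub> \<theta> (B 0)"
      unfolding t(2) using gc hc t(1) by (subst b1) (simp add: m_assoc)
    thus "x \<in> (\<lambda>t. t \<otimes>\<^bsub>T\<^esub> \<theta> (B 0)) ` carrier T" using t gc by auto
  qed
qed

fun cp :: "nat \<Rightarrow> Melt \<Rightarrow> Melt" where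
  "cp p (A i) = (if i = 0 then A 0 else A (Suc ((i - 1) mod p)))"
| "cp p (B j) = B (j mod int p)"
| "cp p Zero = Zero"

lemma nat_aux: "(Suc (i' + k')) mod p = (Suc (i' mod p + k' mod p)) mod (p::nat)"
proof -
  have "Suc (i' mod p + k' mod p) mod p = Suc ((i' mod p + k' mod p) mod p) mod p"
    by (rule mod_Suc_eq[symmetric])
  also have "(i' mod p + k' mod p) mod p = (i' + k') mod p" by (rule mod_add_eq)
  also have "Suc ((i' + k') mod p) mod p = Suc (i' + k') mod p" by (rule mod_Suc_eq)
  finally show ?thesis ..
qed

lemma int_aux: "(1 + int i' + j) mod int p = (1 + int (i' mod p) + j mod int p) mod int p"
proof -
  have "(1 + int (i' mod p) + j mod int p) mod int p = (1 + (int i' mod int p + j mod int p)) mod int p"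
    by (simp add: of_nat_mod add.assoc)
  also have "\<dots> = (1 + (int i' mod int p + j mod int p) mod int p) mod int p"
    by (rule mod_add_right_eq[symmetric])
  also have "(int i' mod int p + j mod int p) mod int p = (int i' + j) mod int p"
    by (rule mod_add_eq)
  also have "(1 + (int i' + j) mod int p) mod int p = (1 + (int i' + j)) mod int p"
    by (rule mod_add_right_eq)
  also have "\<dots> = (1 + int i' + j) mod int p" by (simp add: add.assoc)
  finally show ?thesis ..
qed
lemma c1: "cp p (Mmult (A k) (A 0)) = cp p (Mmult (cp p (A k)) (cp p (A 0)))"
  by (cases k) simp_all
lemma c2: "cp p (Mmult (A 0) (A k)) = cp p (Mmult (cp p (A 0)) (cp p (A k)))"
  by (cases k) simp_all
lemma c3: "cp p (Mmult (A (Suc i')) (A (Suc k'))) = cp p (Mmult (cp p (A (Suc i'))) (cp p (A (Suc k'))))"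
  using nat_aux[of i' k' p] by simp
lemma c4: "cp p (Mmult (A 0) (B j)) = cp p (Mmult (cp p (A 0)) (cp p (B j)))"
  by simp
lemma c5: "cp p (Mmult (A (Suc i')) (B j)) = cp p (Mmult (cp p (A (Suc i'))) (cp p (B j)))"
  using int_aux[of i' j p] by simp
lemma cp_cong: "cp p (Mmult x y) = cp p (Mmult (cp p x) (cp p y))"
proof (cases x)
  case (A i)
  show ?thesis
  proof (cases y)
    case (A k) thus ?thesis using \<open>x = A i\<close>
      by (cases i; cases k) (simp only: c1 c2 c3)+
  next
    case (B j) thus ?thesis using \<open>x = A i\<close>
      by (cases i) (simp only: c4 c5)+
  next
    case Zero thus ?thesis using \<open>x = A i\<close> by simp
  qed
next
  case (B j)
  show ?thesis
  proof (cases y)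
    case (A k) thus ?thesis using \<open>x = B j\<close> by (cases k) simp_all
  qed (use B in simp_all)
next
  case Zero thus ?thesis by simp
qed
instance Melt :: countable by countable_datatype

definition quotT :: "(Melt \<Rightarrow> Melt) \<Rightarrow> nat monoid" where
  "quotT c = \<lparr>carrier = to_nat ` range c,
     mult = \<lambda>u v. to_nat (c (Mmult (from_nat u) (from_nat v))), one = to_nat (c (A 0))\<rparr>"


lemma quotT_props:
  assumes cc: "\<And>x y. c (Mmult x y) = c (Mmult (c x) (c y))"
  shows "monoid (quotT c)" "(to_nat \<circ> c) \<in> mon_hom M (quotT c)"
proof -
  have l1: "\<And>x. Mmult (A 0) x = x" "\<And>x. Mmult x (A 0) = x"
    by (case_tac x; simp)+
  show "monoid (quotT c)"
  proof (rule monoidI)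
    fix u v assume "u \<in> carrier (quotT c)" "v \<in> carrier (quotT c)"
    thus "u \<otimes>\<^bsub>quotT c\<^esub> v \<in> carrier (quotT c)"
      unfolding quotT_def by (auto simp: cc[symmetric])
  next
    show "\<one>\<^bsub>quotT c\<^esub> \<in> carrier (quotT c)" unfolding quotT_def by auto
  next
    fix u v w assume "u \<in> carrier (quotT c)" "v \<in> carrier (quotT c)" "w \<in> carrier (quotT c)"
    then obtain x y z where "u = to_nat (c x)" "v = to_nat (c y)" "w = to_nat (c z)"
      unfolding quotT_def by auto
    moreover have "c (Mmult (c (Mmult (c x) (c y))) (c z)) = c (Mmult (c x) (c (Mmult (c y) (c z))))"
      by (metis cc Mmult_assoc)
    ultimately show "u \<otimes>\<^bsub>quotT c\<^esub> v \<otimes>\<^bsub>quotT c\<^esub> w = u \<otimes>\<^bsub>quotT c\<^esub> (v \<otimes>\<^bsub>quotT c\<^esub> w)"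
      unfolding quotT_def by simp
  next
    fix u assume "u \<in> carrier (quotT c)"
    then obtain x where "u = to_nat (c x)" unfolding quotT_def by auto
    moreover have "c (Mmult (c (A 0)) (c x)) = c x" by (metis cc l1)
    ultimately show "\<one>\<^bsub>quotT c\<^esub> \<otimes>\<^bsub>quotT c\<^esub> u = u" unfolding quotT_def by simp
  next
    fix u assume "u \<in> carrier (quotT c)"
    then obtain x where "u = to_nat (c x)" unfolding quotT_def by auto
    moreover have "c (Mmult (c x) (c (A 0))) = c x" by (metis cc l1)
    ultimately show "u \<otimes>\<^bsub>quotT c\<^esub> \<one>\<^bsub>quotT c\<^esub> = u" unfolding quotT_def by simp
  qed
  show "(to_nat \<circ> c) \<in> mon_hom M (quotT c)"
    unfolding mon_hom_def hom_def quotT_def M_def by (auto simp: cc[symmetric])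
qed

fun sz :: "Melt \<Rightarrow> nat" where
  "sz (A i) = i" | "sz (B j) = nat \<bar>j\<bar>" | "sz Zero = 0"

lemma cp_sep:
  assumes "2 * (sz x + sz y) < p" "x \<noteq> y"
  shows "cp p x \<noteq> cp p y"
proof (cases x)
  case (A i)
  thus ?thesis using assms by (cases y) auto
next
  case (B j)
  show ?thesis
  proof (cases y)
    case (B k)
    show ?thesis
    proof
      assume "cp p x = cp p y"
      hence "j mod int p = k mod int p" using \<open>x = B j\<close> B by simp
      hence d: "int p dvd (j - k)" by (simp add: mod_eq_dvd_iff)
      have "j - k \<noteq> 0" using assms \<open>x = B j\<close> B by simp
      hence "\<bar>int p\<bar> \<le> \<bar>j - k\<bar>" using d dvd_imp_le_int by blast
      thus False using assms \<open>x = B j\<close> B by simp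
    qed
  qed (use B in auto)
next
  case Zero thus ?thesis using assms by (cases y) auto
qed

lemma cp_finite: assumes p: "p > 0" shows "finite (range (cp p))"
proof -
  have "range (cp p) \<subseteq> A ` {..p} \<union> B ` {0..<int p} \<union> {Zero}"
  proof
    fix z assume "z \<in> range (cp p)"
    then obtain x where "z = cp p x" by auto
    thus "z \<in> A ` {..p} \<union> B ` {0..<int p} \<union> {Zero}"
    proof (cases x)
      case (A i) thus ?thesis using \<open>z = cp p x\<close> p
        by (auto intro!: imageI simp: Suc_le_eq)
    next
      case (B j)
      have "j mod int p \<in> {0..<int p}" using p by simp
      thus ?thesis using \<open>z = cp p x\<close> B by auto
    qed auto
  qed
  thus ?thesis by (rule finite_subset) auto
qed

lemma resfin: "residually_finite M"
  unfolding residually_finite_def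
proof (intro ballI impI)
  fix x y :: Melt assume "x \<noteq> y"
  define p where "p = Suc (2 * (sz x + sz y))"
  have "cp p x \<noteq> cp p y" using cp_sep \<open>x \<noteq> y\<close> p_def by simp
  hence "(to_nat \<circ> cp p) x \<noteq> (to_nat \<circ> cp p) y" by simp
  moreover note quotT_props[of "cp p", OF cp_cong]
  moreover have "finite (carrier (quotT (cp p)))"
    unfolding quotT_def using cp_finite p_def by simp
  ultimately show "\<exists>(T :: nat monoid) h. monoid T \<and> finite (carrier T) \<and> h \<in> mon_hom M T \<and> h x \<noteq> h y"
    by blast
qed

theorem mainTheorem3:
  shows "monoid M \<and> residually_finite M \<and> \<not> green_L M (B 0) (B 1) \<and>
    (\<forall>T :: 'b monoid. \<forall>\<theta>. monoid T \<and> finite (carrier T) \<and> \<theta> \<in> mon_hom M T \<longrightarrow>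
        green_L T (\<theta> (B 0)) (\<theta> (B 1)))"
proof (intro conjI allI impI)
  show "monoid M" by (rule monoid_M)
  show "residually_finite M" by (rule resfin)
  show "\<not> green_L M (B 0) (B 1)" by (rule not_L)
next
  fix T :: "'b monoid" and \<theta>
  assume "monoid T \<and> finite (carrier T) \<and> \<theta> \<in> mon_hom M T"
  thus "green_L T (\<theta> (B 0)) (\<theta> (B 1))" using finite_part by blast
qed

end
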